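(* With the notation below, the map $\psi\colon L_{\mathbb{R}}\to\mathbb{Z}^6$ defined by $\psi(\iota_{\mathbb{R}}(\bm q))=\lceil(\gamma(\bm q),-\gamma(\bm q))\rceil$ (componentwise ceiling) for all $\bm q\in\mathbb{R}^2$ is a compatible $\mathbb{Z}^6$-stratification of $L_{\mathbb{R}}$ with the cell structure described below.
   Context: Let $L\subseteq\mathbb{Z}^6$ be the lattice generated by $(1,-1,0,-1,1,0)$ and $(0,-1,1,0,1,-1)$ (the lattice of the diagonal embedding $\mathbb{P}^2\to\mathbb{P}^2\times\mathbb{P}^2$), $\iota\colon\mathbb{Z}^2\to L$ the isomorphism sending the standard basis to these generators, $\iota_{\mathbb{R}}\colon\mathbb{R}^2\to\mathbb{R}^6$ its linear extension, with image $L_{\mathbb{R}}=L\otimes\mathbb{R}$. Let $\mathcal S\subseteq\mathbb{R}^3$ (the staircase surface) be the closure of $\{\bm p\in\mathbb{R}^3:\lceil p_1\rceil+\lceil p_2\rceil+\lceil p_3\rceil=0$ and at least one $p_i\in\mathbb{Z}\}$, with the polyhedral cell structure given by its intersection with the periodic arrangement of hyperplanes $\{p_i=j\}$, $i=1,2,3$, $j\in\mathbb{Z}$ (maximal cells are unit squares). Define $\gamma\colon\mathbb{R}^2\to\mathcal S$ by sending $\bm q=(q_1,q_2)$ to $(q_1,-q_1-q_2,q_2)\in\mathbb{R}^3$ and then projecting onto $\mathcal S$ along the direction $(1,1,1)$ (i.e., $\gamma(\bm q)$ is the point of $\mathcal S$ on the line $(q_1,-q_1-q_2,q_2)+\mathbb{R}(1,1,1)$);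 $\gamma$ is a homeomorphism, and $\iota(\bm u)=(\gamma(\bm u),-\gamma(\bm u))$ for $\bm u\in\mathbb{Z}^2$. The cell structure on $L_{\mathbb{R}}$ is the one transported from $\mathcal S$ via the homeomorphism $\iota_{\mathbb{R}}\circ\gamma^{-1}$ (equivalently, projecting $\mathcal S$ along $(1,1,1)$); it is $L$-equivariant. Give $\mathbb{Z}^6$ the componentwise order and Alexandrov topology (open = up-closed). A compatible $\mathbb{Z}^6$-stratification is a continuous map $\psi\colon L_{\mathbb{R}}\to\mathbb{Z}^6$, constant on each open cell, with $\psi(\bm p+\bm v)=\psi(\bm p)+\bm v$ for all $\bm p\in L_{\mathbb{R}}$, $\bm v\in L$. *)

theory Defs
  imports "HOL-Analysis.Analysis"
begin

definition gen1 :: "int^6" where "gen1 = vector [1, -1, 0, -1, 1, 0]"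
definition gen2 :: "int^6" where "gen2 = vector [0, -1, 1, 0, 1, -1]"

definition real_vec :: "int^'n \<Rightarrow> real^'n" where
  "real_vec v = (\<chi> i. real_of_int (v $ i))"

definition ceil_vec :: "real^'n \<Rightarrow> int^'n" where
  "ceil_vec x = (\<chi> i. \<lceil>x $ i\<rceil>)"

definition latL :: "(int^6) set" where
  "latL = {a *s gen1 + b *s gen2 | a b. True}"

definition iotaR :: "real^2 \<Rightarrow> real^6" where
  "iotaR q = (q $ 1) *\<^sub>R real_vec gen1 + (q $ 2) *\<^sub>R real_vec gen2"

definition LR :: "(real^6) set" where
  "LR = range iotaR"

definition staircase :: "(real^3) set" where
  "staircase = closure {p. \<lceil>p $ 1\<rceil> + \<lceil>p $ 2\<rceil> + \<lceil>p $ 3\<rceil> = 0 \<and> (\<exists>i. p $ i \<in> \<int>)}"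

definition gamma :: "real^2 \<Rightarrow> real^3" where
  "gamma q = (THE s. s \<in> staircase \<and>
      (\<exists>t::real. s = vector [q $ 1, - (q $ 1) - (q $ 2), q $ 2] + t *\<^sub>R vector [1, 1, 1]))"

definition pair_neg :: "real^3 \<Rightarrow> real^6" where
  "pair_neg x = vector [x $ 1, x $ 2, x $ 3, - (x $ 1), - (x $ 2), - (x $ 3)]"

definition arr_open_face :: "(real^3) set \<Rightarrow> bool" where
  "arr_open_face C \<longleftrightarrow> (\<exists>F :: 3 \<Rightarrow> real set.
      (\<forall>i. \<exists>j::int. F i = {real_of_int j} \<or> F i = {real_of_int j <..< real_of_int j + 1}) \<and>
      C = {p. \<forall>i. p $ i \<in> F i})"

text \<open>Open cells of S: relative interiors of the cells of S, i.e. open faces of the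
  arrangement contained in S.\<close>
definition S_open_cells :: "(real^3) set set" where
  "S_open_cells = {C. arr_open_face C \<and> C \<subseteq> staircase}"

definition LR_open_cells :: "(real^6) set set" where
  "LR_open_cells = {iotaR ` (gamma -` C) | C. C \<in> S_open_cells}"

text \<open>Componentwise order on Z^6 and its up-closed (Alexandrov-open) sets.\<close>
definition zle :: "int^6 \<Rightarrow> int^6 \<Rightarrow> bool" where
  "zle a b \<longleftrightarrow> (\<forall>i. a $ i \<le> b $ i)"

definition up_closed :: "(int^6) set \<Rightarrow> bool" where
  "up_closed U \<longleftrightarrow> (\<forall>a\<in>U. \<forall>b. zle a b \<longrightarrow> b \<in> U)"

definition compatible_strat :: "(real^6 \<Rightarrow> int^6) \<Rightarrow> bool" where
  "compatible_strat \<psi> \<longleftrightarrow>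
     (\<forall>U. up_closed U \<longrightarrow> openin (top_of_set LR) {p \<in> LR. \<psi> p \<in> U}) \<and>
     (\<forall>D \<in> LR_open_cells. \<exists>z. \<forall>p \<in> D. \<psi> p = z) \<and>
     (\<forall>p \<in> LR. \<forall>v \<in> latL. \<psi> (p + real_vec v) = \<psi> p + v)"

end

theory Submission
  imports Defs
begin
lemma exhaust_6:
  fixes x :: 6
  shows "x = 1 \<or> x = 2 \<or> x = 3 \<or> x = 4 \<or> x = 5 \<or> x = 6"
proof (induct x)
  case (of_int z)
  then have "z = 0 \<or> z = 1 \<or> z = 2 \<or> z = 3 \<or> z = 4 \<or> z = 5" by fastforce
  then show ?case by auto
qed
lemma forall_6: "(\<forall>i::6. P i) \<longleftrightarrow> P 1 \<and> P 2 \<and> P 3 \<and> P 4 \<and> P 5 \<and> P 6"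
  by (metis exhaust_6)
lemma vector_6 [simp]:
  "(vector[a1,a2,a3,a4,a5,a6] :: 'a::zero^6) $1 = a1"
  "(vector[a1,a2,a3,a4,a5,a6] :: 'a::zero^6) $2 = a2"
  "(vector[a1,a2,a3,a4,a5,a6] :: 'a::zero^6) $3 = a3"
  "(vector[a1,a2,a3,a4,a5,a6] :: 'a::zero^6) $4 = a4"
  "(vector[a1,a2,a3,a4,a5,a6] :: 'a::zero^6) $5 = a5"
  "(vector[a1,a2,a3,a4,a5,a6] :: 'a::zero^6) $6 = a6"
  unfolding vector_def by simp_all

definition RR :: "(real^3) set" where
  "RR = {p. \<lceil>p$1\<rceil> + \<lceil>p$2\<rceil> + \<lceil>p$3\<rceil> \<le> 0 \<and> \<lfloor>p$1\<rfloor> + \<lfloor>p$2\<rfloor> + \<lfloor>p$3\<rfloor> \<ge> -2}"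

lemma semi1:
  fixes y :: real
  shows "\<exists>e>0. \<forall>y'. \<bar>y' - y\<bar> < e \<longrightarrow> \<lceil>y\<rceil> \<le> \<lceil>y'\<rceil> \<and> \<lfloor>y'\<rfloor> \<le> \<lfloor>y\<rfloor>"
proof -
  define e where "e = min (y - of_int \<lceil>y\<rceil> + 1) (of_int \<lfloor>y\<rfloor> + 1 - y)"
  have "e > 0" unfolding e_def by linarith
  moreover have "\<lceil>y\<rceil> \<le> \<lceil>y'\<rceil> \<and> \<lfloor>y'\<rfloor> \<le> \<lfloor>y\<rfloor>" if "\<bar>y' - y\<bar> < e" for y'
    using that unfolding e_def le_ceiling_iff floor_le_iff by auto
  ultimately show ?thesis by blast
qed

lemma semi3:
  fixes p :: "real^3"
  shows "\<exists>e>0. \<forall>p'. dist p' p < e \<longrightarrow> (\<forall>i. \<lceil>p$i\<rceil> \<le> \<lceil>p'$i\<rceil> \<and> \<lfloor>p'$i\<rfloor> \<le> \<lfloor>p$i\<rfloor>)"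
proof -
  obtain e1 where e1: "e1>0" "\<forall>y'. \<bar>y' - p$1\<bar> < e1 \<longrightarrow> \<lceil>p$1\<rceil> \<le> \<lceil>y'\<rceil> \<and> \<lfloor>y'\<rfloor> \<le> \<lfloor>p$1\<rfloor>"
    using semi1 by blast
  obtain e2 where e2: "e2>0" "\<forall>y'. \<bar>y' - p$2\<bar> < e2 \<longrightarrow> \<lceil>p$2\<rceil> \<le> \<lceil>y'\<rceil> \<and> \<lfloor>y'\<rfloor> \<le> \<lfloor>p$2\<rfloor>"
    using semi1 by blast
  obtain e3 where e3: "e3>0" "\<forall>y'. \<bar>y' - p$3\<bar> < e3 \<longrightarrow> \<lceil>p$3\<rceil> \<le> \<lceil>y'\<rceil> \<and> \<lfloor>y'\<rfloor> \<le> \<lfloor>p$3\<rfloor>"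
    using semi1 by blast
  define e where "e = min e1 (min e2 e3)"
  have "e > 0" using e1 e2 e3 unfolding e_def by auto
  moreover have "\<forall>i. \<lceil>p$i\<rceil> \<le> \<lceil>p'$i\<rceil> \<and> \<lfloor>p'$i\<rfloor> \<le> \<lfloor>p$i\<rfloor>" if "dist p' p < e" for p'
  proof -
    have c: "\<bar>p'$i - p$i\<bar> < e" for i
      using component_le_norm_cart[of "p' - p" i] that by (simp add: dist_norm)
    show ?thesis unfolding forall_3 using c[of 1] c[of 2] c[of 3] e1 e2 e3 unfolding e_def by auto
  qed
  ultimately show ?thesis by blast
qed

lemma RR_closed: "closed RR"
proof -
  have "open (- RR)"
    unfolding open_dist
  proof (intro ballI)
    fix x assume "x \<in> - RR"
    obtain e where e: "e>0" "\<forall>p'. dist p' x < e \<longrightarrow> (\<forall>i. \<lceil>x$i\<rceil> \<le> \<lceil>p'$i\<rceil> \<and> \<lfloor>p'$i\<rfloor> \<le> \<lfloor>x$i\<rfloor>)"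
      using semi3 by blast
    have "y \<in> - RR" if "dist y x < e" for y
    proof -
      have "\<forall>i. \<lceil>x$i\<rceil> \<le> \<lceil>y$i\<rceil> \<and> \<lfloor>y$i\<rfloor> \<le> \<lfloor>x$i\<rfloor>" using e that by blast
      then show ?thesis using \<open>x \<in> - RR\<close> unfolding RR_def
        by (smt (verit, best) ComplD ComplI mem_Collect_eq)
    qed
    then show "\<exists>e>0. \<forall>y. dist y x < e \<longrightarrow> y \<in> - RR" using e by blast
  qed
  then show ?thesis by (simp add: closed_def)
qed

lemma floor_ge_ceil: "\<lceil>x::real\<rceil> - 1 \<le> \<lfloor>x\<rfloor>"
  by linarith

lemma int_floor_ceil: "(x::real) \<in> \<int> \<Longrightarrow> \<lfloor>x\<rfloor> = \<lceil>x\<rceil>"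
  by (metis Ints_cases ceiling_of_int floor_of_int)

lemma stair_sub: "staircase \<subseteq> RR"
  unfolding staircase_def
proof (rule closure_minimal[OF _ RR_closed])
  show "{p. \<lceil>p $ 1\<rceil> + \<lceil>p $ 2\<rceil> + \<lceil>p $ 3\<rceil> = 0 \<and> (\<exists>i. p $ i \<in> \<int>)} \<subseteq> RR"
  proof
    fix p :: "real^3" assume "p \<in> {p. \<lceil>p $ 1\<rceil> + \<lceil>p $ 2\<rceil> + \<lceil>p $ 3\<rceil> = 0 \<and> (\<exists>i. p $ i \<in> \<int>)}"
    then obtain i where h: "\<lceil>p $ 1\<rceil> + \<lceil>p $ 2\<rceil> + \<lceil>p $ 3\<rceil> = 0" "p $ i \<in> \<int>" by auto
    have f: "\<lceil>p$j\<rceil> - 1 \<le> \<lfloor>p$j\<rfloor>" for j by (rule floor_ge_ceil)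
    have "\<lfloor>p$i\<rfloor> = \<lceil>p$i\<rceil>" using h(2) by (rule int_floor_ceil)
    then show "p \<in> RR" unfolding RR_def using h(1) f[of 1] f[of 2] f[of 3] exhaust_3[of i] by auto
  qed
qed

lemma ceil_int_eps: "(x::real) \<in> \<int> \<Longrightarrow> 0 < e \<Longrightarrow> e < 1 \<Longrightarrow> \<lceil>x + e\<rceil> = \<lceil>x\<rceil> + 1"
  by (auto elim!: Ints_cases simp: ceiling_eq_iff)

lemma nonint_ceil: "(x::real) \<notin> \<int> \<Longrightarrow> \<lceil>x\<rceil> = \<lfloor>x\<rfloor> + 1"
proof -
  assume a: "x \<notin> \<int>"
  have "x \<noteq> of_int \<lfloor>x\<rfloor>" using a Ints_of_int by metis
  then show ?thesis by (simp add: ceiling_altdef)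
qed

lemma RR_sub: "RR \<subseteq> staircase"
proof
  fix p :: "real^3" assume pR: "p \<in> RR"
  let ?B = "{p::real^3. \<lceil>p $ 1\<rceil> + \<lceil>p $ 2\<rceil> + \<lceil>p $ 3\<rceil> = 0 \<and> (\<exists>i. p $ i \<in> \<int>)}"
  have z: "\<lfloor>p$k\<rfloor> = (if p$k \<in> \<int> then \<lceil>p$k\<rceil> else \<lceil>p$k\<rceil> - 1)" for k
    using nonint_ceil[of "p$k"] int_floor_ceil[of "p$k"] by simp
  have "\<forall>e>0. \<exists>y\<in>?B. dist y p < e"
  proof (intro allI impI)
    fix e :: real assume "e > 0"
    define d where "d = min (e/3) (1/2)"
    have d: "0 < d" "d < 1" "d < e" "2*d < e" using \<open>e>0\<close> unfolding d_def by auto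
    have nd: "norm (d *\<^sub>R axis i (1::real)) = d" for i :: 3 using d by simp
    consider "\<lceil>p$1\<rceil> + \<lceil>p$2\<rceil> + \<lceil>p$3\<rceil> = 0" | "\<lceil>p$1\<rceil> + \<lceil>p$2\<rceil> + \<lceil>p$3\<rceil> = -1"
      | "\<lceil>p$1\<rceil> + \<lceil>p$2\<rceil> + \<lceil>p$3\<rceil> = -2"
    proof -
      have "-2 \<le> \<lceil>p$1\<rceil> + \<lceil>p$2\<rceil> + \<lceil>p$3\<rceil>" "\<lceil>p$1\<rceil> + \<lceil>p$2\<rceil> + \<lceil>p$3\<rceil> \<le> 0"
        using pR z[of 1] z[of 2] z[of 3] unfolding RR_def by (auto split: if_splits)
      then have "\<lceil>p$1\<rceil> + \<lceil>p$2\<rceil> + \<lceil>p$3\<rceil> = 0 \<or> \<lceil>p$1\<rceil> + \<lceil>p$2\<rceil> + \<lceil>p$3\<rceil> = -1 \<or> \<lceil>p$1\<rceil> + \<lceil>p$2\<rceil> + \<lceil>p$3\<rceil> = -2"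
        by arith
      then show thesis using that by blast
    qed
    then show "\<exists>y\<in>?B. dist y p < e"
    proof cases
      case 1
      then have "p$1 \<in> \<int> \<or> p$2 \<in> \<int> \<or> p$3 \<in> \<int>" using pR z[of 1] z[of 2] z[of 3] unfolding RR_def by (auto split: if_splits)
      then have "p \<in> ?B" using 1 by auto
      then show ?thesis using \<open>e>0\<close> by force
    next
      case 2
      have "(p$1 \<in> \<int> \<and> p$2 \<in> \<int>) \<or> (p$1 \<in> \<int> \<and> p$3 \<in> \<int>) \<or> (p$2 \<in> \<int> \<and> p$3 \<in> \<int>)"
        using pR 2 z[of 1] z[of 2] z[of 3] unfolding RR_def by (auto split: if_splits)
      then obtain i j :: 3 where ij: "i \<noteq> j" "p$i \<in> \<int>" "p$j \<in> \<int>"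
      proof (elim disjE conjE)
        assume "p$1 \<in> \<int>" "p$2 \<in> \<int>" then show ?thesis using that[of 1 2] by simp
      next
        assume "p$1 \<in> \<int>" "p$3 \<in> \<int>" then show ?thesis using that[of 1 3] by simp
      next
        assume "p$2 \<in> \<int>" "p$3 \<in> \<int>" then show ?thesis using that[of 2 3] by simp
      qed
      define y where "y = p + d *\<^sub>R axis i 1"
      have yc: "y$k = (if k = i then p$k + d else p$k)" for k
        unfolding y_def by (simp add: axis_def)
      have "\<lceil>y$i\<rceil> = \<lceil>p$i\<rceil> + 1" using yc ceil_int_eps[OF ij(2) d(1) d(2)] by simp
      moreover have "y$k = p$k" if "k \<noteq> i" for k using yc that by simp
      ultimately have "\<lceil>y$1\<rceil> + \<lceil>y$2\<rceil> + \<lceil>y$3\<rceil> = 0" using 2 exhaust_3[of i] by auto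
      moreover have "y$j \<in> \<int>" using yc ij by simp
      ultimately have "y \<in> ?B" by auto
      moreover have "dist y p < e" unfolding y_def dist_norm using nd d by simp
      ultimately show ?thesis by blast
    next
      case 3
      then have I: "p$1 \<in> \<int>" "p$2 \<in> \<int>" "p$3 \<in> \<int>"
        using pR z[of 1] z[of 2] z[of 3] unfolding RR_def by (auto split: if_splits)
      define y where "y = p + d *\<^sub>R axis 1 1 + d *\<^sub>R axis 2 1"
      have yc: "y$1 = p$1 + d" "y$2 = p$2 + d" "y$3 = p$3"
        unfolding y_def by (simp_all add: axis_def)
      have "\<lceil>y$1\<rceil> + \<lceil>y$2\<rceil> + \<lceil>y$3\<rceil> = 0" using yc ceil_int_eps[OF I(1) d(1) d(2)]
         ceil_int_eps[OF I(2) d(1) d(2)] 3 by simp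
      moreover have "y$3 \<in> \<int>" using yc I by simp
      ultimately have "y \<in> ?B" by auto
      moreover have "dist y p < e" unfolding y_def dist_norm
        using norm_triangle_lt[of "d *\<^sub>R axis 1 (1::real)" "d *\<^sub>R axis (2::3) (1::real)" e] nd d 
        by simp
      ultimately show ?thesis by blast
    qed
  qed
  then show "p \<in> staircase" unfolding staircase_def closure_approachable by blast
qed

lemma stair_eq: "staircase = RR"
  using stair_sub RR_sub by blast

definition one3 :: "real^3" where "one3 = vector [1,1,1]"
definition lv :: "real^2 \<Rightarrow> real^3" where "lv q = vector [q$1, - (q$1) - (q$2), q$2]"

lemma one3_comp [simp]: "one3 $ i = 1"
  unfolding one3_def using exhaust_3[of i] by auto

lemma line_comp [simp]: "(v + t *\<^sub>R one3) $ i = v $ i + t"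
  by simp

lemma RR_strict:
  assumes "x \<in> RR" "y \<in> RR" "\<forall>i. x$i < y$i" shows False
proof -
  have "\<lfloor>x$i\<rfloor> < \<lceil>y$i\<rceil>" for i
  proof -
    have "of_int \<lfloor>x$i\<rfloor> < (of_int \<lceil>y$i\<rceil> :: real)"
      using of_int_floor_le[of "x$i"] le_of_int_ceiling[of "y$i"] assms(3) by (metis le_less_trans less_le_trans)
    then show ?thesis by simp
  qed
  then show False using assms(1,2) unfolding RR_def
    using \<open>\<And>i. \<lfloor>x$i\<rfloor> < \<lceil>y$i\<rceil>\<close>[of 1] \<open>\<And>i. \<lfloor>x$i\<rfloor> < \<lceil>y$i\<rceil>\<close>[of 2] \<open>\<And>i. \<lfloor>x$i\<rfloor> < \<lceil>y$i\<rceil>\<close>[of 3]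
    by simp
qed

lemma line_RR_lip:
  assumes "v + t *\<^sub>R one3 \<in> RR" "w + t' *\<^sub>R one3 \<in> RR" "\<forall>i. \<bar>v$i - w$i\<bar> \<le> d"
  shows "\<bar>t - t'\<bar> \<le> d"
proof (rule ccontr)
  assume "\<not> \<bar>t - t'\<bar> \<le> d"
  then consider "t' - t > d" | "t - t' > d" by linarith
  then show False
  proof cases
    case 1
    have "\<forall>i. (v + t *\<^sub>R one3)$i < (w + t' *\<^sub>R one3)$i"
    proof
      fix i show "(v + t *\<^sub>R one3)$i < (w + t' *\<^sub>R one3)$i"
        using abs_le_D1[of "v$i - w$i" d] abs_le_D2[of "v$i - w$i" d] assms(3) 1 by simp
    qed
    then show False using RR_strict assms(1,2) by blast
  next
    case 2
    have "\<forall>i. (w + t' *\<^sub>R one3)$i < (v + t *\<^sub>R one3)$i"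
    proof
      fix i show "(w + t' *\<^sub>R one3)$i < (v + t *\<^sub>R one3)$i"
        using abs_le_D1[of "v$i - w$i" d] abs_le_D2[of "v$i - w$i" d] assms(3) 2 by simp
    qed
    then show False using RR_strict assms(1,2) by blast
  qed
qed

lemma line_RR_unique:
  assumes "v + t *\<^sub>R one3 \<in> RR" "v + t' *\<^sub>R one3 \<in> RR" shows "t = t'"
  using line_RR_lip[OF assms, of 0] by simp

lemma left_const:
  fixes y b :: real
  shows "\<exists>\<delta>>0. \<forall>s. b - \<delta> < s \<and> s \<le> b \<longrightarrow> \<lceil>y + s\<rceil> = \<lceil>y + b\<rceil>"
proof -
  define \<delta> where "\<delta> = y + b - of_int \<lceil>y+b\<rceil> + 1"
  have "\<delta> > 0" unfolding \<delta>_def by linarith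
  moreover have "\<lceil>y + s\<rceil> = \<lceil>y + b\<rceil>" if "b - \<delta> < s" "s \<le> b" for s
    unfolding ceiling_eq_iff using that le_of_int_ceiling[of "y+b"] unfolding \<delta>_def by linarith
  ultimately show ?thesis by blast
qed

lemma right_const:
  fixes y b :: real
  shows "\<exists>\<delta>>0. \<forall>s. b < s \<and> s < b + \<delta> \<longrightarrow> \<lceil>y + s\<rceil> = \<lfloor>y + b\<rfloor> + 1"
proof -
  define \<delta> where "\<delta> = of_int \<lfloor>y+b\<rfloor> + 1 - (y + b)"
  have "\<delta> > 0" unfolding \<delta>_def by linarith
  moreover have "\<lceil>y + s\<rceil> = \<lfloor>y + b\<rfloor> + 1" if "b < s" "s < b + \<delta>" for s
  proof -
    have "of_int \<lfloor>y+b\<rfloor> \<le> y+b" by simp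
    then have "of_int \<lfloor>y+b\<rfloor> < y + s" "y + s < of_int \<lfloor>y+b\<rfloor> + 1" using that unfolding \<delta>_def by linarith+
    then show ?thesis unfolding ceiling_eq_iff by simp
  qed
  ultimately show ?thesis by blast
qed

lemma line_RR_exists: "\<exists>t. v + t *\<^sub>R one3 \<in> RR"
proof -
  define g where "g t = \<lceil>v$1+t\<rceil> + \<lceil>v$2+t\<rceil> + \<lceil>v$3+t\<rceil>" for t
  define T where "T = {t. g t \<le> 0}"
  define M where "M = \<bar>v$1\<bar> + \<bar>v$2\<bar> + \<bar>v$3\<bar> + 1"
  have cle: "\<lceil>y\<rceil> \<le> -1" if "y \<le> -1" for y :: real
    using that by (simp add: ceiling_le_iff)
  have cgt: "\<lceil>y\<rceil> \<ge> 1" if "y > 0" for y :: real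
  proof -
    have "0 < real_of_int \<lceil>y\<rceil>" using that le_of_int_ceiling[of y] by linarith
    then show ?thesis by simp
  qed
  have ab: "v$k \<le> \<bar>v$k\<bar>" "0 \<le> \<bar>v$k\<bar>" for k by simp_all
  have a1: "\<lceil>v$1 + -M\<rceil> \<le> -1" by (rule cle) (use ab[of 1] ab[of 2] ab[of 3] in \<open>unfold M_def; linarith\<close>)
  have a2: "\<lceil>v$2 + -M\<rceil> \<le> -1" by (rule cle) (use ab[of 1] ab[of 2] ab[of 3] in \<open>unfold M_def; linarith\<close>)
  have a3: "\<lceil>v$3 + -M\<rceil> \<le> -1" by (rule cle) (use ab[of 1] ab[of 2] ab[of 3] in \<open>unfold M_def; linarith\<close>)
  have "-M \<in> T" unfolding T_def g_def
    using a1 a2 a3 by simp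
  then have ne: "T \<noteq> {}" by blast
  have ub: "t \<le> M" if "t \<in> T" for t
  proof (rule ccontr)
    assume "\<not> t \<le> M"
    have ab2: "- v$k \<le> \<bar>v$k\<bar>" for k by simp
    have p: "v$1+t > 0" "v$2+t > 0" "v$3+t > 0"
      using \<open>\<not> t \<le> M\<close> ab[of 1] ab[of 2] ab[of 3] ab2[of 1] ab2[of 2] ab2[of 3] unfolding M_def by linarith+
    have "g t \<ge> 3" unfolding g_def 
      using cgt[OF p(1)] cgt[OF p(2)] cgt[OF p(3)] by linarith
    then show False using that unfolding T_def by simp
  qed
  have bdd: "bdd_above T" by (rule bdd_above.I[of _ M]) (use ub in blast)
  define b where "b = Sup T"
  have upper: "t \<le> b" if "t \<in> T" for t unfolding b_def using cSup_upper[OF that bdd] .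
  have gb: "g b \<le> 0"
  proof (rule ccontr)
    assume a: "\<not> g b \<le> 0"
    obtain d1 where d1: "d1 > 0" "\<forall>s. b - d1 < s \<and> s \<le> b \<longrightarrow> \<lceil>v$1 + s\<rceil> = \<lceil>v$1 + b\<rceil>" using left_const by blast
    obtain d2 where d2: "d2 > 0" "\<forall>s. b - d2 < s \<and> s \<le> b \<longrightarrow> \<lceil>v$2 + s\<rceil> = \<lceil>v$2 + b\<rceil>" using left_const by blast
    obtain d3 where d3: "d3 > 0" "\<forall>s. b - d3 < s \<and> s \<le> b \<longrightarrow> \<lceil>v$3 + s\<rceil> = \<lceil>v$3 + b\<rceil>" using left_const by blast
    define d where "d = min d1 (min d2 d3)"
    have "b - d < Sup T" unfolding b_def d_def using d1 d2 d3 by simp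
    then obtain s where s: "s \<in> T" "b - d < s" using less_cSup_iff[OF ne bdd] by blast
    have "s \<le> b" using upper s by blast
    then have "b - d1 < s" "b - d2 < s" "b - d3 < s" using s unfolding d_def by auto
    then have "g s = g b" unfolding g_def
      using d1(2)[rule_format, of s] d2(2)[rule_format, of s] d3(2)[rule_format, of s] \<open>s \<le> b\<close> by simp
    then show False using a s unfolding T_def by simp
  qed
  have hb: "\<lfloor>v$1+b\<rfloor> + \<lfloor>v$2+b\<rfloor> + \<lfloor>v$3+b\<rfloor> \<ge> -2"
  proof -
    obtain d1 where d1: "d1 > 0" "\<forall>s. b < s \<and> s < b + d1 \<longrightarrow> \<lceil>v$1 + s\<rceil> = \<lfloor>v$1 + b\<rfloor> + 1" using right_const by blast
    obtain d2 where d2: "d2 > 0" "\<forall>s. b < s \<and> s < b + d2 \<longrightarrow> \<lceil>v$2 + s\<rceil> = \<lfloor>v$2 + b\<rfloor> + 1" using right_const by blast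
    obtain d3 where d3: "d3 > 0" "\<forall>s. b < s \<and> s < b + d3 \<longrightarrow> \<lceil>v$3 + s\<rceil> = \<lfloor>v$3 + b\<rfloor> + 1" using right_const by blast
    define s where "s = b + min d1 (min d2 d3) / 2"
    have "b < s" "s < b + d1" "s < b + d2" "s < b + d3" unfolding s_def using d1 d2 d3 by auto
    then have "g s = \<lfloor>v$1+b\<rfloor> + \<lfloor>v$2+b\<rfloor> + \<lfloor>v$3+b\<rfloor> + 3" unfolding g_def
      using d1(2)[rule_format, of s] d2(2)[rule_format, of s] d3(2)[rule_format, of s] by simp
    moreover have "s \<notin> T" using upper \<open>b < s\<close> by force
    ultimately show ?thesis unfolding T_def by simp
  qed
  have "v + b *\<^sub>R one3 \<in> RR" unfolding RR_def using gb hb unfolding g_def by simp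
  then show ?thesis by blast
qed

lemma gamma_ex1:
  fixes q :: "real^2"
  shows "\<exists>!s. s \<in> staircase \<and> (\<exists>t::real. s = vector [q $ 1, - (q $ 1) - (q $ 2), q $ 2] + t *\<^sub>R vector [1, 1, 1])"
proof -
  obtain t where t: "lv q + t *\<^sub>R one3 \<in> RR" using line_RR_exists by blast
  show ?thesis
  proof (rule ex1I[of _ "lv q + t *\<^sub>R one3"])
    have "lv q + t *\<^sub>R one3 \<in> staircase" using t stair_eq by simp
    moreover have "lv q + t *\<^sub>R one3 = vector [q $ 1, - (q $ 1) - (q $ 2), q $ 2] + t *\<^sub>R vector [1, 1, 1]"
      by (simp add: lv_def one3_def)
    ultimately show "lv q + t *\<^sub>R one3 \<in> staircase \<and> (\<exists>t'::real. lv q + t *\<^sub>R one3 = vector [q $ 1, - (q $ 1) - (q $ 2), q $ 2] + t' *\<^sub>R vector [1, 1, 1])"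
      by blast
  next
    fix s assume "s \<in> staircase \<and> (\<exists>t'::real. s = vector [q $ 1, - (q $ 1) - (q $ 2), q $ 2] + t' *\<^sub>R vector [1, 1, 1])"
    then obtain t' where s0: "s \<in> staircase" "s = vector [q $ 1, - (q $ 1) - (q $ 2), q $ 2] + t' *\<^sub>R vector [1, 1, 1]"
      by blast
    have s: "s \<in> RR" "s = lv q + t' *\<^sub>R one3" using s0 stair_eq by (simp_all add: lv_def one3_def)
    then have "t' = t" using line_RR_unique t by blast
    then show "s = lv q + t *\<^sub>R one3" using s by simp
  qed
qed

lemma gamma_prop: "gamma q \<in> RR \<and> (\<exists>t. gamma q = lv q + t *\<^sub>R one3)"
proof -
  have "gamma q \<in> staircase \<and> (\<exists>t::real. gamma q = vector [q $ 1, - (q $ 1) - (q $ 2), q $ 2] + t *\<^sub>R vector [1, 1, 1])"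
    unfolding gamma_def by (rule theI'[OF gamma_ex1])
  then obtain t where "gamma q \<in> staircase" "gamma q = vector [q $ 1, - (q $ 1) - (q $ 2), q $ 2] + t *\<^sub>R vector [1, 1, 1]"
    by blast
  then have "gamma q \<in> RR" "gamma q = lv q + t *\<^sub>R one3" using stair_eq by (simp_all add: lv_def one3_def)
  then show ?thesis by blast
qed

lemma gamma_eq:
  assumes "s \<in> RR" "s = lv q + t *\<^sub>R one3" shows "gamma q = s"
proof -
  have "s \<in> staircase \<and> (\<exists>t::real. s = vector [q $ 1, - (q $ 1) - (q $ 2), q $ 2] + t *\<^sub>R vector [1, 1, 1])"
    using assms stair_eq by (auto simp: lv_def one3_def)
  then show ?thesis unfolding gamma_def by (rule the1_equality[OF gamma_ex1])
qed

lemma iota_lv: "iotaR q = pair_neg (lv q)"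
  unfolding vec_eq_iff forall_6
  by (simp add: iotaR_def real_vec_def gen1_def gen2_def pair_neg_def lv_def)

lemma iota_comp: "iotaR q $ 1 = q $ 1" "iotaR q $ 3 = q $ 2"
  unfolding iota_lv by (simp_all add: pair_neg_def lv_def)

lemma lv_shift:
  "lv (q + vector [real_of_int a, real_of_int b]) = lv q + vector [of_int a, of_int (-a-b), of_int b]"
  unfolding vec_eq_iff forall_3 by (simp add: lv_def)

lemma RR_shift:
  assumes "s \<in> RR" "a + c + b = 0"
  shows "s + vector [of_int a, of_int c, of_int b] \<in> RR"
proof -
  have "\<lceil>s$1 + of_int a\<rceil> + \<lceil>s$2 + of_int c\<rceil> + \<lceil>s$3 + of_int b\<rceil> = \<lceil>s$1\<rceil> + \<lceil>s$2\<rceil> + \<lceil>s$3\<rceil>"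
    using assms(2) by (simp only: ceiling_add_of_int; linarith?)
  moreover have "\<lfloor>s$1 + of_int a\<rfloor> + \<lfloor>s$2 + of_int c\<rfloor> + \<lfloor>s$3 + of_int b\<rfloor> = \<lfloor>s$1\<rfloor> + \<lfloor>s$2\<rfloor> + \<lfloor>s$3\<rfloor>"
    using assms(2) by (simp only: floor_add_int[symmetric]; linarith?)
  ultimately show ?thesis using assms(1) unfolding RR_def by simp
qed

lemma gamma_shift:
  "gamma (q + vector [real_of_int a, real_of_int b]) = gamma q + vector [of_int a, of_int (-a-b), of_int b]"
proof -
  obtain t where t: "gamma q \<in> RR" "gamma q = lv q + t *\<^sub>R one3" using gamma_prop by blast
  have "gamma q + vector [of_int a, of_int (-a-b), of_int b] \<in> RR"
    using RR_shift[OF t(1), of a "-a-b" b] by simp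
  moreover have "gamma q + vector [of_int a, of_int (-a-b), of_int b]
      = lv (q + vector [real_of_int a, real_of_int b]) + t *\<^sub>R one3"
    unfolding lv_shift t(2) by (simp add: algebra_simps)
  ultimately show ?thesis by (rule gamma_eq)
qed

lemma iota_shift:
  "iotaR (q + vector [real_of_int a, real_of_int b]) = iotaR q + real_vec (a *s gen1 + b *s gen2)"
  unfolding vec_eq_iff forall_6
  by (simp add: iotaR_def real_vec_def gen1_def gen2_def algebra_simps)

lemma ceil_shift:
  assumes "a + b + c = 0"
  shows "ceil_vec (pair_neg (s + vector [of_int a, of_int c, of_int b])) = ceil_vec (pair_neg s) + (a *s gen1 + b *s gen2)"
  unfolding vec_eq_iff forall_6 using assms
  by (simp add: ceil_vec_def pair_neg_def gen1_def gen2_def ceiling_minus; linarith?)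

lemma face_const:
  assumes "arr_open_face C" "x \<in> C" "y \<in> C"
  shows "\<lceil>x$i\<rceil> = \<lceil>y$i\<rceil> \<and> \<lfloor>x$i\<rfloor> = \<lfloor>y$i\<rfloor>"
proof -
  obtain F :: "3 \<Rightarrow> real set" where F: "\<forall>i. \<exists>j::int. F i = {real_of_int j} \<or> F i = {real_of_int j <..< real_of_int j + 1}"
    "C = {p. \<forall>i. p $ i \<in> F i}" using assms(1) unfolding arr_open_face_def by blast
  have xy: "x$i \<in> F i" "y$i \<in> F i" using assms(2,3) F(2) by auto
  obtain j :: int where "F i = {real_of_int j} \<or> F i = {real_of_int j <..< real_of_int j + 1}" using F(1) by blast
  then show ?thesis
  proof
    assume "F i = {real_of_int j}" then show ?thesis using xy by simp
  next
    assume h: "F i = {real_of_int j <..< real_of_int j + 1}"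
    have "\<lceil>x$i\<rceil> = j + 1" "\<lceil>y$i\<rceil> = j + 1" "\<lfloor>x$i\<rfloor> = j" "\<lfloor>y$i\<rfloor> = j"
      using xy h unfolding ceiling_eq_iff floor_eq_iff by auto
    then show ?thesis by simp
  qed
qed

lemma face_ceil:
  assumes "arr_open_face C" "x \<in> C" "y \<in> C"
  shows "ceil_vec (pair_neg x) = ceil_vec (pair_neg y)"
  using face_const[OF assms, of 1] face_const[OF assms, of 2] face_const[OF assms, of 3]
  unfolding vec_eq_iff forall_6
  by (simp add: ceil_vec_def pair_neg_def ceiling_minus)

lemma gamma_cont:
  "\<exists>e>0. \<forall>q. dist (iotaR q) (iotaR q0) < e \<longrightarrow> zle (ceil_vec (pair_neg (gamma q0))) (ceil_vec (pair_neg (gamma q)))"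
proof -
  obtain e0 where e0: "e0 > 0" "\<forall>p'. dist p' (gamma q0) < e0 \<longrightarrow> (\<forall>i. \<lceil>gamma q0$i\<rceil> \<le> \<lceil>p'$i\<rceil> \<and> \<lfloor>p'$i\<rfloor> \<le> \<lfloor>gamma q0$i\<rfloor>)"
    using semi3 by blast
  obtain t0 where t0: "gamma q0 \<in> RR" "gamma q0 = lv q0 + t0 *\<^sub>R one3" using gamma_prop by blast
  have "zle (ceil_vec (pair_neg (gamma q0))) (ceil_vec (pair_neg (gamma q)))"
    if D: "dist (iotaR q) (iotaR q0) < e0 / 13" for q
  proof -
    define D where "D = dist (iotaR q) (iotaR q0)"
    obtain t where t: "gamma q \<in> RR" "gamma q = lv q + t *\<^sub>R one3" using gamma_prop by blast
    have c1: "\<bar>q$1 - q0$1\<bar> \<le> D" using component_le_norm_cart[of "iotaR q - iotaR q0" 1]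
      unfolding D_def dist_norm by (simp add: iota_comp)
    have c2: "\<bar>q$2 - q0$2\<bar> \<le> D" using component_le_norm_cart[of "iotaR q - iotaR q0" 3]
      unfolding D_def dist_norm by (simp add: iota_comp)
    have lvd: "\<forall>i. \<bar>lv q $ i - lv q0 $ i\<bar> \<le> 2 * D"
      unfolding forall_3 using c1 c2 by (simp add: lv_def abs_le_iff) 
    have tt: "\<bar>t - t0\<bar> \<le> 2 * D"
      using line_RR_lip[of "lv q" t "lv q0" t0 "2 * D"] t t0 lvd by simp
    have comp: "\<bar>(gamma q - gamma q0) $ i\<bar> \<le> 4 * D" for i
      using lvd tt unfolding t(2) t0(2) by (simp add: abs_le_iff) (smt (verit))
    have "dist (gamma q) (gamma q0) \<le> 12 * D"
      unfolding dist_norm using norm_le_l1_cart[of "gamma q - gamma q0"] comp[of 1] comp[of 2] comp[of 3]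
      unfolding sum_3 by linarith
    then have "dist (gamma q) (gamma q0) < e0" using D e0(1) unfolding D_def by linarith
    then have m: "\<forall>i. \<lceil>gamma q0$i\<rceil> \<le> \<lceil>gamma q$i\<rceil> \<and> \<lfloor>gamma q$i\<rfloor> \<le> \<lfloor>gamma q0$i\<rfloor>" using e0 by blast
    show ?thesis unfolding zle_def forall_6
      using m[rule_format, of 1] m[rule_format, of 2] m[rule_format, of 3]
      by (simp add: ceil_vec_def pair_neg_def ceiling_minus)
  qed
  moreover have "e0 / 13 > 0" using e0 by simp
  ultimately show ?thesis by blast
qed

theorem lemma5p8:
  fixes \<psi> :: "real^6 \<Rightarrow> int^6"
  assumes "\<forall>q. \<psi> (iotaR q) = ceil_vec (pair_neg (gamma q))"
  shows "compatible_strat \<psi>"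
  unfolding compatible_strat_def
proof (intro conjI)
  show "\<forall>U. up_closed U \<longrightarrow> openin (top_of_set LR) {p \<in> LR. \<psi> p \<in> U}"
  proof (intro allI impI)
    fix U assume up: "up_closed U"
    show "openin (top_of_set LR) {p \<in> LR. \<psi> p \<in> U}"
      unfolding openin_euclidean_subtopology_iff
    proof (intro conjI ballI)
      show "{p \<in> LR. \<psi> p \<in> U} \<subseteq> LR" by blast
    next
      fix x assume x: "x \<in> {p \<in> LR. \<psi> p \<in> U}"
      then obtain q0 where q0: "x = iotaR q0" unfolding LR_def by blast
      obtain e where e: "e > 0" "\<forall>q. dist (iotaR q) (iotaR q0) < e \<longrightarrow> zle (ceil_vec (pair_neg (gamma q0))) (ceil_vec (pair_neg (gamma q)))"
        using gamma_cont by blast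
      have "x' \<in> {p \<in> LR. \<psi> p \<in> U}" if xL: "x' \<in> LR" and xd: "dist x' x < e" for x'
      proof -
        obtain q where q: "x' = iotaR q" using xL unfolding LR_def by blast
        have "zle (\<psi> x) (\<psi> x')" using e(2) xd q q0 assms by simp
        then have "\<psi> x' \<in> U" using up x unfolding up_closed_def by blast
        then show ?thesis using xL by blast
      qed
      then show "\<exists>e>0. \<forall>x'\<in>LR. dist x' x < e \<longrightarrow> x' \<in> {p \<in> LR. \<psi> p \<in> U}" using e(1) by blast
    qed
  qed
next
  show "\<forall>D\<in>LR_open_cells. \<exists>z. \<forall>p\<in>D. \<psi> p = z"
  proof
    fix D assume "D \<in> LR_open_cells"
    then obtain C where C: "D = iotaR ` (gamma -` C)" "arr_open_face C" unfolding LR_open_cells_def S_open_cells_def by blast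
    show "\<exists>z. \<forall>p\<in>D. \<psi> p = z"
    proof (cases "D = {}")
      case True then show ?thesis by blast
    next
      case False
      then obtain q0 where q0: "gamma q0 \<in> C" using C(1) by blast
      have "\<psi> p = ceil_vec (pair_neg (gamma q0))" if pD: "p \<in> D" for p
      proof -
        obtain q where "p = iotaR q" "gamma q \<in> C" using pD C(1) by blast
        then show ?thesis using assms face_ceil[OF C(2) \<open>gamma q \<in> C\<close> q0] by simp
      qed
      then show ?thesis by blast
    qed
  qed
next
  show "\<forall>p\<in>LR. \<forall>v\<in>latL. \<psi> (p + real_vec v) = \<psi> p + v"
  proof (intro ballI)
    fix p v assume p: "p \<in> LR" and v: "v \<in> latL"
    obtain q where q: "p = iotaR q" using p unfolding LR_def by blast
    obtain a b where ab: "v = a *s gen1 + b *s gen2" using v unfolding latL_def by blast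
    have "p + real_vec v = iotaR (q + vector [real_of_int a, real_of_int b])"
      using iota_shift q ab by simp
    then have "\<psi> (p + real_vec v) = ceil_vec (pair_neg (gamma q + vector [of_int a, of_int (-a-b), of_int b]))"
      using assms gamma_shift by simp
    also have "\<dots> = \<psi> p + v" using ceil_shift[of a b "-a-b" "gamma q"] assms q ab by simp
    finally show "\<psi> (p + real_vec v) = \<psi> p + v" .
  qed
qed
end
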